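(* Let $\mathfrak g$ be a nonsemisimple complex Lie algebra, $\mathfrak p$ a solvable nonperfect ideal of $\mathfrak g$, and $V$ an irreducible $\mathfrak g$-module. Then the following are equivalent: (1) $V$ is a locally finite $\mathfrak p$-module (every $v\in V$ lies in a finite-dimensional $\mathfrak p$-submodule); (2) $V$ is a quasi-Whittaker module for $\mathfrak g$, i.e., there exist a Lie algebra homomorphism $\phi:\mathfrak p\to\mathbb C$ and a vector $v\in V$ with $pv=\phi(p)v$ for all $p\in\mathfrak p$ that generates $V$ as a $\mathfrak g$-module.
   Context: A Lie algebra homomorphism $\phi:\mathfrak p\to\mathbb C$ is a linear map vanishing on $[\mathfrak p,\mathfrak p]$. A vector $v$ with $pv=\phi(p)v$ for all $p\in\mathfrak p$ is called a quasi-Whittaker vector of type $\phi$, and a module generated by such a vector a quasi-Whittaker module of type $\phi$. *)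

theory Defs
  imports Complex_Main
begin

definition fin_dim_subspace :: "(complex \<Rightarrow> 'a::ab_group_add \<Rightarrow> 'a) \<Rightarrow> 'a set \<Rightarrow> bool" where
  "fin_dim_subspace sc W \<longleftrightarrow> (\<exists>B. finite B \<and> B \<subseteq> W \<and> module.span sc B = W)"

definition lie_algebra :: "(complex \<Rightarrow> 'g::ab_group_add \<Rightarrow> 'g) \<Rightarrow> ('g \<Rightarrow> 'g \<Rightarrow> 'g) \<Rightarrow> bool" where
  "lie_algebra sg br \<longleftrightarrow> vector_space sg \<and>
     (\<forall>a b x y z. br (sg a x + sg b y) z = sg a (br x z) + sg b (br y z)) \<and>
     (\<forall>a b x y z. br z (sg a x + sg b y) = sg a (br z x) + sg b (br z y)) \<and>
     (\<forall>x. br x x = 0) \<and>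
     (\<forall>x y z. br x (br y z) + br y (br z x) + br z (br x y) = 0)"

definition lie_ideal :: "(complex \<Rightarrow> 'g::ab_group_add \<Rightarrow> 'g) \<Rightarrow> ('g \<Rightarrow> 'g \<Rightarrow> 'g) \<Rightarrow> 'g set \<Rightarrow> bool" where
  "lie_ideal sg br I \<longleftrightarrow> module.subspace sg I \<and> (\<forall>x y. y \<in> I \<longrightarrow> br x y \<in> I)"

definition derived :: "(complex \<Rightarrow> 'g::ab_group_add \<Rightarrow> 'g) \<Rightarrow> ('g \<Rightarrow> 'g \<Rightarrow> 'g) \<Rightarrow> 'g set \<Rightarrow> 'g set" where
  "derived sg br I = module.span sg {br a b | a b. a \<in> I \<and> b \<in> I}"

fun derived_series :: "(complex \<Rightarrow> 'g::ab_group_add \<Rightarrow> 'g) \<Rightarrow> ('g \<Rightarrow> 'g \<Rightarrow> 'g) \<Rightarrow> 'g set \<Rightarrow> nat \<Rightarrow> 'g set" where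
  "derived_series sg br I 0 = I"
| "derived_series sg br I (Suc n) = derived sg br (derived_series sg br I n)"

definition solvable :: "(complex \<Rightarrow> 'g::ab_group_add \<Rightarrow> 'g) \<Rightarrow> ('g \<Rightarrow> 'g \<Rightarrow> 'g) \<Rightarrow> 'g set \<Rightarrow> bool" where
  "solvable sg br I \<longleftrightarrow> (\<exists>n. derived_series sg br I n = {0})"

definition perfect :: "(complex \<Rightarrow> 'g::ab_group_add \<Rightarrow> 'g) \<Rightarrow> ('g \<Rightarrow> 'g \<Rightarrow> 'g) \<Rightarrow> 'g set \<Rightarrow> bool" where
  "perfect sg br I \<longleftrightarrow> derived sg br I = I"

definition semisimple :: "(complex \<Rightarrow> 'g::ab_group_add \<Rightarrow> 'g) \<Rightarrow> ('g \<Rightarrow> 'g \<Rightarrow> 'g) \<Rightarrow> bool" where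
  "semisimple sg br \<longleftrightarrow> (UNIV :: 'g set) \<noteq> {0} \<and>
     (\<forall>I. lie_ideal sg br I \<and> solvable sg br I \<longrightarrow> I = {0})"

definition lie_module ::
  "(complex \<Rightarrow> 'g::ab_group_add \<Rightarrow> 'g) \<Rightarrow> ('g \<Rightarrow> 'g \<Rightarrow> 'g) \<Rightarrow>
   (complex \<Rightarrow> 'v::ab_group_add \<Rightarrow> 'v) \<Rightarrow> ('g \<Rightarrow> 'v \<Rightarrow> 'v) \<Rightarrow> bool" where
  "lie_module sg br sv act \<longleftrightarrow> vector_space sv \<and>
     (\<forall>a b x y v. act (sg a x + sg b y) v = sv a (act x v) + sv b (act y v)) \<and>
     (\<forall>a b x v w. act x (sv a v + sv b w) = sv a (act x v) + sv b (act x w)) \<and>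
     (\<forall>x y v. act (br x y) v = act x (act y v) - act y (act x v))"

text \<open>W is a P-submodule (P = UNIV: a g-submodule).\<close>
definition submodule ::
  "(complex \<Rightarrow> 'v::ab_group_add \<Rightarrow> 'v) \<Rightarrow> ('g \<Rightarrow> 'v \<Rightarrow> 'v) \<Rightarrow> 'g set \<Rightarrow> 'v set \<Rightarrow> bool" where
  "submodule sv act P W \<longleftrightarrow> module.subspace sv W \<and> (\<forall>x\<in>P. \<forall>w\<in>W. act x w \<in> W)"

definition irreducible_module ::
  "(complex \<Rightarrow> 'v::ab_group_add \<Rightarrow> 'v) \<Rightarrow> ('g \<Rightarrow> 'v \<Rightarrow> 'v) \<Rightarrow> bool" where
  "irreducible_module sv act \<longleftrightarrow> (UNIV :: 'v set) \<noteq> {0} \<and>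
     (\<forall>W. submodule sv act UNIV W \<longrightarrow> W = {0} \<or> W = UNIV)"

definition locally_finite ::
  "(complex \<Rightarrow> 'v::ab_group_add \<Rightarrow> 'v) \<Rightarrow> ('g \<Rightarrow> 'v \<Rightarrow> 'v) \<Rightarrow> 'g set \<Rightarrow> bool" where
  "locally_finite sv act P \<longleftrightarrow>
     (\<forall>v. \<exists>W. v \<in> W \<and> submodule sv act P W \<and> fin_dim_subspace sv W)"

definition lie_hom_to_C ::
  "(complex \<Rightarrow> 'g::ab_group_add \<Rightarrow> 'g) \<Rightarrow> ('g \<Rightarrow> 'g \<Rightarrow> 'g) \<Rightarrow> 'g set \<Rightarrow> ('g \<Rightarrow> complex) \<Rightarrow> bool" where
  "lie_hom_to_C sg br P \<phi> \<longleftrightarrow>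
     (\<forall>a b x y. x \<in> P \<longrightarrow> y \<in> P \<longrightarrow> \<phi> (sg a x + sg b y) = a * \<phi> x + b * \<phi> y) \<and>
     (\<forall>x\<in>derived sg br P. \<phi> x = 0)"

definition quasi_whittaker_vector ::
  "(complex \<Rightarrow> 'v::ab_group_add \<Rightarrow> 'v) \<Rightarrow> ('g \<Rightarrow> 'v \<Rightarrow> 'v) \<Rightarrow> 'g set \<Rightarrow> ('g \<Rightarrow> complex) \<Rightarrow> 'v \<Rightarrow> bool" where
  "quasi_whittaker_vector sv act P \<phi> v \<longleftrightarrow> (\<forall>p\<in>P. act p v = sv (\<phi> p) v)"

definition generates ::
  "(complex \<Rightarrow> 'v::ab_group_add \<Rightarrow> 'v) \<Rightarrow> ('g \<Rightarrow> 'v \<Rightarrow> 'v) \<Rightarrow> 'v \<Rightarrow> bool" where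
  "generates sv act v \<longleftrightarrow> (\<forall>W. submodule sv act UNIV W \<and> v \<in> W \<longrightarrow> W = UNIV)"

definition quasi_whittaker_module ::
  "(complex \<Rightarrow> 'g::ab_group_add \<Rightarrow> 'g) \<Rightarrow> ('g \<Rightarrow> 'g \<Rightarrow> 'g) \<Rightarrow>
   (complex \<Rightarrow> 'v::ab_group_add \<Rightarrow> 'v) \<Rightarrow> ('g \<Rightarrow> 'v \<Rightarrow> 'v) \<Rightarrow> 'g set \<Rightarrow> bool" where
  "quasi_whittaker_module sg br sv act P \<longleftrightarrow>
     (\<exists>\<phi> v. lie_hom_to_C sg br P \<phi> \<and> quasi_whittaker_vector sv act P \<phi> v \<and> generates sv act v)"

end

theory Submission
  imports Defs "HOL-Computational_Algebra.Fundamental_Theorem_Algebra"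
begin

locale cvs = vector_space scale for scale :: "complex \<Rightarrow> 'b::ab_group_add \<Rightarrow> 'b" (infixr \<open>*s\<close> 75)
begin

definition lin :: "('b \<Rightarrow> 'b) \<Rightarrow> bool" where
  "lin T \<longleftrightarrow> (\<forall>x y. T (x + y) = T x + T y) \<and> (\<forall>c x. T (c *s x) = c *s T x)"

lemma lin_add: "lin T \<Longrightarrow> T (x + y) = T x + T y" by (simp add: lin_def)
lemma lin_scale: "lin T \<Longrightarrow> T (c *s x) = c *s T x" by (simp add: lin_def)
lemma lin_zero: "lin T \<Longrightarrow> T 0 = 0"
  using lin_scale[of T 0 0] by simp
lemma lin_diff: "lin T \<Longrightarrow> T (x - y) = T x - T y"
  using lin_add[of T "x - y" y] by (simp add: algebra_simps)
lemma lin_sum: "lin T \<Longrightarrow> T (sum f A) = (\<Sum>a\<in>A. T (f a))"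
  by (induction A rule: infinite_finite_induct) (auto simp: lin_zero lin_add)

lemma lin_span_into:
  assumes "lin T" "subspace U" "T ` S \<subseteq> U" "x \<in> span S"
  shows "T x \<in> U"
proof -
  have "subspace {x. T x \<in> U}"
    using assms(1,2) unfolding subspace_def by (simp add: lin_add lin_scale lin_zero)
  moreover have "S \<subseteq> {x. T x \<in> U}" using assms(3) by auto
  ultimately show ?thesis using span_minimal assms(4) by blast
qed

lemma lin_funpow: "lin T \<Longrightarrow> lin (T ^^ k)"
proof (induction k)
  case 0 show ?case by (simp add: lin_def)
next
  case (Suc k) then show ?case unfolding lin_def funpow.simps comp_def by simp
qed

lemma indep_chain:
  fixes f :: "nat \<Rightarrow> 'b" and n :: nat
  assumes "\<And>k. k < n \<Longrightarrow> f k \<notin> span (f ` {..<k})"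
  shows "independent (f ` {..<n}) \<and> inj_on f {..<n}"
  using assms
proof (induction n)
  case 0 then show ?case by (simp add: independent_empty)
next
  case (Suc n)
  have ih: "independent (f ` {..<n}) \<and> inj_on f {..<n}"
    by (rule Suc.IH) (rule Suc.prems, simp)
  have nn: "f n \<notin> span (f ` {..<n})" by (rule Suc.prems) simp
  then have nin: "f n \<notin> f ` {..<n}" using span_base by metis
  have e: "f ` {..<Suc n} = insert (f n) (f ` {..<n})" by (auto simp: lessThan_Suc)
  have "independent (insert (f n) (f ` {..<n}))"
    using ih nn by (intro independent_insertI) auto
  moreover have "inj_on f {..<Suc n}"
    unfolding lessThan_Suc using ih nin by (simp add: inj_on_insert)
  ultimately show ?case unfolding e by (intro conjI)
qed

lemma krylov:
  assumes "lin T" "u \<noteq> 0" "finite B0" "\<And>k. (T ^^ k) u \<in> span B0"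
  shows "\<exists>m\<ge>1. independent ((\<lambda>j. (T ^^ j) u) ` {..<m}) \<and> inj_on (\<lambda>j. (T ^^ j) u) {..<m}
            \<and> (T ^^ m) u \<in> span ((\<lambda>j. (T ^^ j) u) ` {..<m})"
proof -
  define f where "f j = (T ^^ j) u" for j
  have ex: "\<exists>k. f k \<in> span (f ` {..<k})"
  proof (rule ccontr)
    assume "\<not> ?thesis"
    then have "independent (f ` {..<Suc (card B0)}) \<and> inj_on f {..<Suc (card B0)}"
      by (intro indep_chain) auto
    moreover have "f ` {..<Suc (card B0)} \<subseteq> span B0" using assms(4) by (auto simp: f_def)
    ultimately have "card (f ` {..<Suc (card B0)}) \<le> card B0"
      using independent_span_bound[OF assms(3)] by simp
    moreover have "card (f ` {..<Suc (card B0)}) = Suc (card B0)"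
      using \<open>independent _ \<and> inj_on f _\<close> by (simp add: card_image)
    ultimately show False by simp
  qed
  define m where "m = (LEAST k. f k \<in> span (f ` {..<k}))"
  have m1: "f m \<in> span (f ` {..<m})" unfolding m_def using LeastI_ex[OF ex] .
  have m2: "f k \<notin> span (f ` {..<k})" if "k < m" for k
    using not_less_Least[of k "\<lambda>k. f k \<in> span (f ` {..<k})"] that unfolding m_def by simp
  have "m \<noteq> 0"
  proof
    assume "m = 0"
    then have "f 0 \<in> span {}" using m1 by simp
    then show False using assms(2) by (simp add: f_def)
  qed
  moreover have "independent (f ` {..<m}) \<and> inj_on f {..<m}"
    using indep_chain[of m f] m2 by simp
  ultimately have "\<exists>m\<ge>1. independent (f ` {..<m}) \<and> inj_on f {..<m} \<and> f m \<in> span (f ` {..<m})"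
    using m1 by (intro exI[of _ m]) simp
  moreover have "f = (\<lambda>j. (T ^^ j) u)" by (simp add: f_def fun_eq_iff)
  ultimately show ?thesis by simp
qed


definition opoly :: "('b \<Rightarrow> 'b) \<Rightarrow> complex poly \<Rightarrow> 'b \<Rightarrow> 'b" where
  "opoly T p u = (\<Sum>j<Suc (degree p). coeff p j *s (T ^^ j) u)"

lemma opoly_upto:
  assumes "degree p < N"
  shows "opoly T p u = (\<Sum>j<N. coeff p j *s (T ^^ j) u)"
  unfolding opoly_def
proof (rule sum.mono_neutral_left)
  show "finite {..<N}" by simp
  show "{..<Suc (degree p)} \<subseteq> {..<N}" using assms by auto
  show "\<forall>i\<in>{..<N} - {..<Suc (degree p)}. coeff p i *s (T ^^ i) u = 0"
    by (auto simp: coeff_eq_0)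
qed

lemma coeff_lin_mult:
  fixes q :: "complex poly"
  shows "coeff ([:-r, 1:] * q) j = (if j = 0 then 0 else coeff q (j - 1)) - r * coeff q j"
  by (cases j) (auto simp: mult_pCons_left algebra_simps)

lemma opoly_lin:
  assumes "lin T"
  shows "opoly T ([:-r, 1:] * q) u = T (opoly T q u) - r *s opoly T q u"
proof -
  define N where "N = Suc (Suc (degree q))"
  have d: "degree ([:-r, 1:] * q) < N"
    using degree_mult_le[of "[:-r, 1:]" q] by (simp add: N_def)
  have "opoly T ([:-r, 1:] * q) u = (\<Sum>j<N. coeff ([:-r, 1:] * q) j *s (T ^^ j) u)"
    by (rule opoly_upto[OF d])
  also have "\<dots> = (\<Sum>j<N. (if j = 0 then 0 else coeff q (j - 1)) *s (T ^^ j) u)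
                   - (\<Sum>j<N. (r * coeff q j) *s (T ^^ j) u)"
    unfolding coeff_lin_mult scale_left_diff_distrib sum_subtractf by (rule refl)
  also have "(\<Sum>j<N. (if j = 0 then 0 else coeff q (j - 1)) *s (T ^^ j) u)
      = (\<Sum>j<Suc (degree q). coeff q j *s (T ^^ (Suc j)) u)"
    unfolding N_def sum.lessThan_Suc_shift by simp
  also have "\<dots> = T (\<Sum>j<Suc (degree q). coeff q j *s (T ^^ j) u)"
    by (simp add: lin_sum[OF assms] lin_scale[OF assms] del: sum.lessThan_Suc)
  also have "(\<Sum>j<Suc (degree q). coeff q j *s (T ^^ j) u) = opoly T q u"
    by (simp add: opoly_def)
  also have "(\<Sum>j<N. (r * coeff q j) *s (T ^^ j) u) = r *s opoly T q u"
    by (simp add: opoly_upto[of q N] N_def scale_sum_right del: sum.lessThan_Suc)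
  finally show ?thesis .
qed

lemma funpow_in:
  assumes "\<forall>x\<in>U. T x \<in> U" "u \<in> U"
  shows "(T ^^ k) u \<in> U"
  by (induction k) (use assms in auto)

lemma opoly_in:
  assumes "subspace U" "\<forall>x\<in>U. T x \<in> U" "u \<in> U"
  shows "opoly T p u \<in> U"
  unfolding opoly_def
  by (intro subspace_sum[OF assms(1)] subspace_scale[OF assms(1)] funpow_in[OF assms(2,3)])

lemma eigen_poly:
  assumes "lin T" "subspace U" "\<forall>x\<in>U. T x \<in> U" "u \<in> U" "u \<noteq> 0"
  shows "p \<noteq> 0 \<Longrightarrow> opoly T p u = 0 \<Longrightarrow> \<exists>v\<in>U. v \<noteq> 0 \<and> (\<exists>c. T v = c *s v)"
proof (induction "degree p" arbitrary: p)
  case 0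
  then have "opoly T p u = coeff p 0 *s u" by (simp add: opoly_def)
  moreover have "coeff p 0 \<noteq> 0" using 0 leading_coeff_neq_0[of p] by simp
  ultimately show ?case using 0 assms(5) by simp
next
  case (Suc k)
  have "\<not> constant (poly p)" using Suc(2) constant_degree[of p] by simp
  then obtain z where "poly p z = 0" using fundamental_theorem_of_algebra by blast
  then have "[:-z, 1:] dvd p" by (simp add: poly_eq_0_iff_dvd)
  then obtain q where pq: "p = [:-z, 1:] * q" by (elim dvdE)
  have q0: "q \<noteq> 0" using pq Suc(3) by auto
  have "degree p = 1 + degree q" unfolding pq by (subst degree_mult_eq) (use q0 in auto)
  then have dq: "k = degree q" using Suc(2) by simp
  define v where "v = opoly T q u"
  have vU: "v \<in> U" unfolding v_def by (rule opoly_in[OF assms(2,3,4)])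
  have e: "T v - z *s v = 0" using Suc(4) opoly_lin[OF assms(1), of z q u] pq by (simp add: v_def)
  show ?case
  proof (cases "v = 0")
    case True
    then show ?thesis using Suc(1)[OF dq q0] by (simp add: v_def)
  next
    case False
    then show ?thesis using vU e by (intro bexI[of _ v]) auto
  qed
qed

lemma eigen:
  assumes "lin T" "subspace U" "\<forall>x\<in>U. T x \<in> U" "U \<subseteq> span B0" "finite B0" "u \<in> U" "u \<noteq> 0"
  shows "\<exists>v\<in>U. v \<noteq> 0 \<and> (\<exists>c. T v = c *s v)"
proof -
  have "\<And>k. (T ^^ k) u \<in> span B0" using funpow_in[OF assms(3,6)] assms(4) by auto
  from krylov[OF assms(1,7,5) this] obtain m where m: "m \<ge> 1"
    "inj_on (\<lambda>j. (T ^^ j) u) {..<m}" "(T ^^ m) u \<in> span ((\<lambda>j. (T ^^ j) u) ` {..<m})"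
    by blast
  then obtain a where a: "(\<Sum>v\<in>(\<lambda>j. (T ^^ j) u) ` {..<m}. a v *s v) = (T ^^ m) u"
    using span_finite[of "(\<lambda>j. (T ^^ j) u) ` {..<m}"] by auto
  then have a2: "(T ^^ m) u = (\<Sum>j<m. a ((T ^^ j) u) *s (T ^^ j) u)"
    using sum.reindex[OF m(2), of "\<lambda>v. a v *s v"] by simp
  define p where "p = monom 1 m - (\<Sum>j<m. monom (a ((T ^^ j) u)) j)"
  have cp: "coeff p j = (if j = m then 1 else 0) - (if j < m then a ((T ^^ j) u) else 0)" for j
    unfolding p_def by (simp add: coeff_sum coeff_monom)
  have "coeff p m = 1" using cp by simp
  then have p0: "p \<noteq> 0" by auto
  have dp: "degree p < Suc m" using cp by (intro le_imp_less_Suc degree_le) auto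
  have "opoly T p u = (\<Sum>j<Suc m. coeff p j *s (T ^^ j) u)" by (rule opoly_upto[OF dp])
  also have "\<dots> = (\<Sum>j<m. coeff p j *s (T ^^ j) u) + (T ^^ m) u" using cp by simp
  also have "(\<Sum>j<m. coeff p j *s (T ^^ j) u) = (\<Sum>j<m. - (a ((T ^^ j) u) *s (T ^^ j) u))"
    using cp by (intro sum.cong) auto
  also have "\<dots> = - (T ^^ m) u" by (simp add: a2 sum_negf)
  finally have "opoly T p u = 0" by simp
  then show ?thesis using eigen_poly[OF assms(1,2,3,6,7) p0] by blast
qed


definition tr :: "'b set \<Rightarrow> ('b \<Rightarrow> 'b) \<Rightarrow> complex" where
  "tr B T = (\<Sum>b\<in>B. representation B (T b) b)"

lemma rep_comp:
  assumes "finite B" "independent B" "lin S" "\<forall>c\<in>B. S c \<in> span B" "v \<in> span B"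
  shows "representation B (S v) b = (\<Sum>c\<in>B. representation B v c * representation B (S c) b)"
proof -
  have "v = (\<Sum>c\<in>B. representation B v c *s c)"
    using sum_representation_eq[OF assms(2,5,1)] by simp
  then have "S v = (\<Sum>c\<in>B. representation B v c *s S c)"
    using assms(3) by (metis (no_types, lifting) lin_scale lin_sum sum.cong)
  then have "representation B (S v) = representation B (\<Sum>c\<in>B. representation B v c *s S c)"
    by simp
  also have "\<dots> = (\<lambda>b. \<Sum>c\<in>B. representation B (representation B v c *s S c) b)"
    using assms(4) by (intro representation_sum[OF assms(2)]) (simp add: span_scale)
  finally show ?thesis
    using assms(4) by (simp add: representation_scale[OF assms(2)])
qed

lemma tr_comm:
  assumes "finite B" "independent B" "lin S" "lin T" "\<forall>b\<in>B. S b \<in> span B" "\<forall>b\<in>B. T b \<in> span B"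
  shows "tr B (\<lambda>x. S (T x)) = tr B (\<lambda>x. T (S x))"
proof -
  have "tr B (\<lambda>x. S (T x)) = (\<Sum>b\<in>B. \<Sum>c\<in>B. representation B (T b) c * representation B (S c) b)"
    unfolding tr_def using assms by (intro sum.cong refl rep_comp) auto
  also have "\<dots> = (\<Sum>c\<in>B. \<Sum>b\<in>B. representation B (T b) c * representation B (S c) b)"
    by (rule sum.swap)
  also have "\<dots> = (\<Sum>c\<in>B. \<Sum>b\<in>B. representation B (S c) b * representation B (T b) c)"
    by (simp add: mult.commute)
  also have "\<dots> = tr B (\<lambda>x. T (S x))"
    unfolding tr_def using assms by (intro sum.cong refl rep_comp[symmetric]) auto
  finally show ?thesis .
qed

lemma tr_diff:
  assumes "independent B" "\<forall>b\<in>B. S b \<in> span B" "\<forall>b\<in>B. T b \<in> span B"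
  shows "tr B (\<lambda>x. S x - T x) = tr B S - tr B T"
  unfolding tr_def using assms
  by (simp add: representation_diff sum_subtractf)

lemma tr_flag:
  assumes "finite B" "independent B" "\<forall>b\<in>B. T b - c *s b \<in> span (B - {b})"
  shows "tr B T = of_nat (card B) * c"
proof -
  have "representation B (T b) b = c" if b: "b \<in> B" for b
  proof -
    define d where "d = T b - c *s b"
    have d1: "d \<in> span (B - {b})" using assms(3) b by (simp add: d_def)
    have d2: "d \<in> span B" using d1 span_mono[of "B - {b}" B] by auto
    have "representation B d b = representation (B - {b}) d b"
      using representation_extend[OF assms(2) d1] by auto
    also have "\<dots> = 0" using representation_ne_zero[of "B - {b}" d b] by auto
    finally have r0: "representation B d b = 0" .
    have "T b = d + c *s b" by (simp add: d_def)
    then have "representation B (T b) b = representation B d b + representation B (c *s b) b"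
      using representation_add[OF assms(2) span_scale[OF span_base[OF b]] d2] by simp
    also have "\<dots> = c"
      using r0 representation_scale[OF assms(2) span_base[OF b]] representation_basis[OF assms(2) b]
      by simp
    finally show ?thesis .
  qed
  then show ?thesis unfolding tr_def by simp
qed

end

locale lie_setting =
  fixes sg :: "complex \<Rightarrow> 'g::ab_group_add \<Rightarrow> 'g" and br :: "'g \<Rightarrow> 'g \<Rightarrow> 'g"
    and sv :: "complex \<Rightarrow> 'v::ab_group_add \<Rightarrow> 'v" and act :: "'g \<Rightarrow> 'v \<Rightarrow> 'v"
  assumes LA: "lie_algebra sg br" and LM: "lie_module sg br sv act"
begin

sublocale G: cvs sg using LA by (simp add: lie_algebra_def cvs_def)
sublocale V: cvs sv using LM by (simp add: lie_module_def cvs_def)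

lemma act_add_v: "act x (u + w) = act x u + act x w"
  using LM unfolding lie_module_def by (metis V.scale_one)
lemma act_scale_v: "act x (sv c u) = sv c (act x u)"
proof -
  have "act x (sv c u + sv 0 0) = sv c (act x u) + sv 0 (act x 0)"
    using LM unfolding lie_module_def by blast
  then show ?thesis by simp
qed
lemma act_lin: "V.lin (act x)"
  by (simp add: V.lin_def act_add_v act_scale_v)
lemma act_zero_v: "act x 0 = 0"
  using V.lin_zero[OF act_lin] .
lemma act_diff_v: "act x (u - w) = act x u - act x w"
  using V.lin_diff[OF act_lin] .

lemma act_add_g: "act (x + y) v = act x v + act y v"
  using LM unfolding lie_module_def by (metis V.scale_one G.scale_one)
lemma act_scale_g: "act (sg c x) v = sv c (act x v)"
proof -
  have "act (sg c x + sg 0 x) v = sv c (act x v) + sv 0 (act x v)"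
    using LM unfolding lie_module_def by blast
  then show ?thesis by simp
qed
lemma act_zero_g: "act 0 v = 0"
  using act_scale_g[of 0 0 v] by simp
lemma act_br: "act (br x y) v = act x (act y v) - act y (act x v)"
  using LM unfolding lie_module_def by blast

lemma br_add_l: "br (x + y) z = br x z + br y z"
  using LA unfolding lie_algebra_def by (metis G.scale_one)
lemma br_add_r: "br z (x + y) = br z x + br z y"
  using LA unfolding lie_algebra_def by (metis G.scale_one)
lemma br_self: "br x x = 0"
  using LA unfolding lie_algebra_def by blast
lemma br_antisym: "br x y = - br y x"
proof -
  have "br (x + y) (x + y) = br x x + br x y + (br y x + br y y)"
    by (simp add: br_add_l br_add_r)
  then have "0 = br x y + br y x" by (simp add: br_self)
  then show ?thesis by (simp add: eq_neg_iff_add_eq_0)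
qed

lemma derived_series_Suc': "derived_series sg br I (Suc n) = derived_series sg br (derived sg br I) n"
  by (induction n) simp_all

lemma br_in_derived: "x \<in> P \<Longrightarrow> y \<in> P \<Longrightarrow> br x y \<in> derived sg br P"
  unfolding derived_def by (rule G.span_base) blast

lemma derived_sub:
  assumes "G.subspace P" "\<forall>x\<in>P. \<forall>y\<in>P. br x y \<in> P"
  shows "derived sg br P \<subseteq> P"
  unfolding derived_def using assms by (intro G.span_minimal) auto


lemma key_trace:
  assumes Qsub: "Q \<subseteq> P" and xP: "x \<in> P" and qQ: "q \<in> Q"
    and Qcl: "\<forall>y\<in>P. \<forall>i\<in>Q. br y i \<in> Q"
    and finB0: "finite B0" and W0: "W \<subseteq> V.span B0"
    and WP: "\<forall>p\<in>P. \<forall>w\<in>W. act p w \<in> W"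
    and w1W: "w1 \<in> W" and w1: "w1 \<noteq> 0"
    and lam: "\<forall>i\<in>Q. act i w1 = sv (lam i) w1"
  shows "lam (br x q) = 0"
proof -
  define T where "T = act x"
  have linT: "V.lin T" unfolding T_def by (rule act_lin)
  have TW: "\<forall>w\<in>W. T w \<in> W" using WP xP by (simp add: T_def)
  have "\<And>k. (T ^^ k) w1 \<in> V.span B0" using V.funpow_in[OF TW w1W] W0 by auto
  from V.krylov[OF linT w1 finB0 this] obtain m where m: "m \<ge> 1"
    "V.independent ((\<lambda>j. (T ^^ j) w1) ` {..<m})" "inj_on (\<lambda>j. (T ^^ j) w1) {..<m}"
    "(T ^^ m) w1 \<in> V.span ((\<lambda>j. (T ^^ j) w1) ` {..<m})"
    by blast
  define f where "f j = (T ^^ j) w1" for j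
  define Kk where "Kk k = f ` {..<k}" for k
  have fS: "f (Suc j) = act x (f j)" for j by (simp add: f_def T_def)
  have Kmono: "Kk j \<subseteq> Kk k" if "j \<le> k" for j k using that by (auto simp: Kk_def)
  have flag: "\<forall>i\<in>Q. act i (f k) - sv (lam i) (f k) \<in> V.span (Kk k)" for k
  proof (induction k)
    case 0
    show ?case using lam by (simp add: f_def V.span_zero)
  next
    case (Suc k)
    show ?case
    proof
      fix i assume iQ: "i \<in> Q"
      have bQ: "br x i \<in> Q" using Qcl xP iQ by blast
      define d where "d = act i (f k) - sv (lam i) (f k)"
      define d' where "d' = act (br x i) (f k) - sv (lam (br x i)) (f k)"
      have dK: "d \<in> V.span (Kk k)" using Suc iQ by (simp add: d_def)
      have d'K: "d' \<in> V.span (Kk k)" using Suc bQ by (simp add: d'_def)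
      have "act x ` Kk k \<subseteq> Kk (Suc k)" by (auto simp: Kk_def fS[symmetric])
      then have xd: "act x d \<in> V.span (Kk (Suc k))"
        using V.lin_span_into[OF act_lin V.subspace_span _ dK] V.span_superset by blast
      have d'K2: "d' \<in> V.span (Kk (Suc k))" using d'K V.span_mono[OF Kmono[of k "Suc k"]] by auto
      have fk: "f k \<in> V.span (Kk (Suc k))" by (rule V.span_base) (simp add: Kk_def)
      have e1: "act i (f (Suc k)) = act x (act i (f k)) - act (br x i) (f k)"
        unfolding fS act_br by simp
      have e2: "act i (f k) = d + sv (lam i) (f k)" by (simp add: d_def)
      have e3: "act (br x i) (f k) = d' + sv (lam (br x i)) (f k)" by (simp add: d'_def)
      have e4: "act i (f (Suc k)) = act x d + sv (lam i) (f (Suc k)) - (d' + sv (lam (br x i)) (f k))"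
        by (subst e1, subst e2, subst e3) (simp add: act_add_v act_scale_v fS)
      have "act i (f (Suc k)) - sv (lam i) (f (Suc k))
          = act x d - d' - sv (lam (br x i)) (f k)"
        unfolding e4 by (simp add: algebra_simps)
      also have "\<dots> \<in> V.span (Kk (Suc k))"
        using xd d'K2 fk by (intro V.span_diff V.span_scale)
      finally show "act i (f (Suc k)) - sv (lam i) (f (Suc k)) \<in> V.span (Kk (Suc k))" .
    qed
  qed
  define K where "K = Kk m"
  have Keq: "K = (\<lambda>j. (T ^^ j) w1) ` {..<m}" by (simp add: K_def Kk_def f_def[abs_def])
  have indK: "V.independent K" using m(2) Keq by simp
  have finK: "finite K" by (simp add: K_def Kk_def)
  have injf: "inj_on f {..<m}" using m(3) by (simp add: f_def[abs_def])
  have cardK: "card K = m" unfolding K_def Kk_def using card_image[OF injf] by simp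
  have xK: "\<forall>b\<in>K. act x b \<in> V.span K"
  proof
    fix b assume "b \<in> K"
    then obtain j where j: "j < m" "b = f j" by (auto simp: K_def Kk_def)
    show "act x b \<in> V.span K"
    proof (cases "Suc j < m")
      case True
      then show ?thesis using j by (intro V.span_base) (auto simp: K_def Kk_def fS[symmetric])
    next
      case False
      then have "Suc j = m" using j by simp
      have "act x b = f m" using j \<open>Suc j = m\<close> fS[of j] by simp
      also have "\<dots> \<in> V.span K" using m(4) Keq by (simp add: f_def)
      finally show ?thesis .
    qed
  qed
  have xK2: "act x v \<in> V.span K" if "v \<in> V.span K" for v
    using V.lin_span_into[OF act_lin V.subspace_span _ that] xK by blast
  have iK: "\<forall>b\<in>K. act i b \<in> V.span K" if iQ: "i \<in> Q" for i
  proof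
    fix b assume "b \<in> K"
    then obtain j where j: "j < m" "b = f j" by (auto simp: K_def Kk_def)
    have "act i (f j) - sv (lam i) (f j) \<in> V.span K"
      using flag[of j] iQ V.span_mono[OF Kmono[of j m]] j unfolding K_def by auto
    moreover have "sv (lam i) (f j) \<in> V.span K"
      using j by (intro V.span_scale V.span_base) (auto simp: K_def Kk_def)
    ultimately have "act i (f j) - sv (lam i) (f j) + sv (lam i) (f j) \<in> V.span K"
      by (rule V.span_add)
    then show "act i b \<in> V.span K" using j by simp
  qed
  have iK2: "act i v \<in> V.span K" if "i \<in> Q" "v \<in> V.span K" for i v
    using V.lin_span_into[OF act_lin V.subspace_span _ that(2)] iK[OF that(1)] by blast
  have bxq: "br x q \<in> Q" using Qcl xP qQ by blast
  have "V.tr K (act (br x q)) = V.tr K (\<lambda>v. act x (act q v) - act q (act x v))"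
    by (rule arg_cong[where f="V.tr K"]) (simp add: fun_eq_iff act_br)
  also have "\<dots> = V.tr K (\<lambda>v. act x (act q v)) - V.tr K (\<lambda>v. act q (act x v))"
    using iK[OF qQ] xK by (intro V.tr_diff indK) (auto intro: xK2 iK2[OF qQ])
  also have "V.tr K (\<lambda>v. act x (act q v)) = V.tr K (\<lambda>v. act q (act x v))"
    using iK[OF qQ] xK by (intro V.tr_comm finK indK act_lin) auto
  finally have tr0: "V.tr K (act (br x q)) = 0" by simp
  have "V.tr K (act (br x q)) = of_nat (card K) * lam (br x q)"
  proof (rule V.tr_flag[OF finK indK], rule ballI)
    fix b assume "b \<in> K"
    then obtain j where j: "j < m" "b = f j" by (auto simp: K_def Kk_def)
    have "Kk j \<subseteq> K - {b}"
    proof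
      fix y assume "y \<in> Kk j"
      then obtain l where l: "l < j" "y = f l" by (auto simp: Kk_def)
      have "f l \<noteq> f j" using injf l j by (metis inj_on_contraD lessThan_iff less_trans nat_neq_iff)
      then show "y \<in> K - {b}" using l j by (auto simp: K_def Kk_def)
    qed
    then show "act (br x q) b - sv (lam (br x q)) b \<in> V.span (K - {b})"
      using flag[of j] bxq j V.span_mono by blast
  qed
  then have "of_nat m * lam (br x q) = 0" using tr0 cardK by simp
  then show ?thesis using m(1) by simp
qed


lemma lie_thm:
  assumes finBg: "finite Bg" and spBg: "G.span Bg = UNIV" and finB0: "finite B0"
  shows "G.subspace P \<Longrightarrow> (\<forall>x\<in>P. \<forall>y\<in>P. br x y \<in> P) \<Longrightarrow> derived_series sg br P n = {0}
    \<Longrightarrow> V.subspace W \<Longrightarrow> W \<subseteq> V.span B0 \<Longrightarrow> w0 \<in> W \<Longrightarrow> w0 \<noteq> 0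
    \<Longrightarrow> (\<forall>p\<in>P. \<forall>w\<in>W. act p w \<in> W)
    \<Longrightarrow> \<exists>w\<in>W. w \<noteq> 0 \<and> (\<forall>p\<in>P. \<exists>c. act p w = sv c w)"
proof (induction n arbitrary: P W w0)
  case 0
  then have "P = {0}" by simp
  then show ?case using 0 by (intro bexI[of _ w0]) (auto simp: act_zero_g intro: exI[of _ 0])
next
  case (Suc n)
  define Q where "Q = derived sg br P"
  have QP: "Q \<subseteq> P" unfolding Q_def by (rule derived_sub) (use Suc.prems in auto)
  have Qsub: "G.subspace Q" unfolding Q_def derived_def by simp
  have Qcl': "\<forall>y\<in>P. \<forall>i\<in>Q. br y i \<in> Q"
    using QP by (auto simp: Q_def intro!: br_in_derived)
  have Qcl: "\<forall>x\<in>Q. \<forall>y\<in>Q. br x y \<in> Q" using Qcl' QP by blast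
  have Qser: "derived_series sg br Q n = {0}"
    using Suc.prems(3) by (simp only: derived_series_Suc' Q_def)
  have QW: "\<forall>p\<in>Q. \<forall>w\<in>W. act p w \<in> W" using Suc.prems(8) QP by blast
  obtain w1 where w1: "w1 \<in> W" "w1 \<noteq> 0" "\<forall>q\<in>Q. \<exists>c. act q w1 = sv c w1"
    using Suc.IH[OF Qsub Qcl Qser Suc.prems(4,5,6,7) QW] by blast
  define lam where "lam q = (SOME c. act q w1 = sv c w1)" for q
  have lam: "\<forall>q\<in>Q. act q w1 = sv (lam q) w1"
    using w1(3) unfolding lam_def by (metis (mono_tags, lifting) someI_ex)
  define Wl where "Wl = {w\<in>W. \<forall>q\<in>Q. act q w = sv (lam q) w}"
  have WlW: "Wl \<subseteq> W" by (auto simp: Wl_def)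
  have w1Wl: "w1 \<in> Wl" using w1 lam by (simp add: Wl_def)
  have Wlsub: "V.subspace Wl"
  proof (rule V.subspaceI)
    show "0 \<in> Wl" using Suc.prems(4) by (simp add: Wl_def V.subspace_0 act_zero_v)
    show "x + y \<in> Wl" if "x \<in> Wl" "y \<in> Wl" for x y
      using that Suc.prems(4) by (auto simp: Wl_def V.subspace_add act_add_v V.scale_right_distrib)
    show "sv c x \<in> Wl" if "x \<in> Wl" for c x
      using that Suc.prems(4) by (auto simp: Wl_def V.subspace_scale act_scale_v V.scale_left_commute)
  qed
  have kt: "lam (br x q) = 0" if "x \<in> P" "q \<in> Q" for x q
    by (rule key_trace[OF QP that Qcl' finB0 Suc.prems(5) Suc.prems(8) w1(1,2) lam])
  have inv: "act x w \<in> Wl" if xP: "x \<in> P" and wWl: "w \<in> Wl" for x w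
  proof -
    have "act x w \<in> W" using Suc.prems(8) xP wWl WlW by blast
    moreover have "act q (act x w) = sv (lam q) (act x w)" if qQ: "q \<in> Q" for q
    proof -
      have "act (br x q) w = act x (act q w) - act q (act x w)" by (rule act_br)
      moreover have "act (br x q) w = sv (lam (br x q)) w"
        using wWl Qcl' xP qQ by (auto simp: Wl_def)
      moreover have "act q w = sv (lam q) w" using wWl qQ by (auto simp: Wl_def)
      ultimately show ?thesis using kt[OF xP qQ] by (simp add: act_scale_v)
    qed
    ultimately show ?thesis by (simp add: Wl_def)
  qed
  obtain Bw where Bw: "Bw \<subseteq> Wl" "V.independent Bw" "Wl \<subseteq> V.span Bw"
    using V.maximal_independent_subset[of Wl] by blast
  have finBw: "finite Bw"
    using V.independent_span_bound[OF finB0 Bw(2)] Bw(1) WlW Suc.prems(5) by blast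
  have Bwne: "Bw \<noteq> {}" using Bw(3) w1Wl w1(2) by auto
  have comm: "lam (br p1 p2) = 0" if p1: "p1 \<in> P" and p2: "p2 \<in> P" for p1 p2
  proof -
    have bQ: "br p1 p2 \<in> Q" unfolding Q_def by (rule br_in_derived[OF p1 p2])
    have st: "\<forall>b\<in>Bw. act p b \<in> V.span Bw" if "p \<in> P" for p
      using inv[OF that] Bw(1,3) by blast
    have st2: "act p v \<in> V.span Bw" if "p \<in> P" "v \<in> V.span Bw" for p v
      using V.lin_span_into[OF act_lin V.subspace_span _ that(2)] st[OF that(1)] by blast
    have "V.tr Bw (act (br p1 p2)) = V.tr Bw (\<lambda>v. act p1 (act p2 v) - act p2 (act p1 v))"
      by (rule arg_cong[where f="V.tr Bw"]) (simp add: fun_eq_iff act_br)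
    also have "\<dots> = V.tr Bw (\<lambda>v. act p1 (act p2 v)) - V.tr Bw (\<lambda>v. act p2 (act p1 v))"
      using st[OF p1] st[OF p2] by (intro V.tr_diff Bw(2)) (auto intro: st2 p1 p2)
    also have "V.tr Bw (\<lambda>v. act p1 (act p2 v)) = V.tr Bw (\<lambda>v. act p2 (act p1 v))"
      using st[OF p1] st[OF p2] by (intro V.tr_comm finBw Bw(2) act_lin) auto
    finally have tr0: "V.tr Bw (act (br p1 p2)) = 0" by simp
    have "V.tr Bw (act (br p1 p2)) = of_nat (card Bw) * lam (br p1 p2)"
    proof (rule V.tr_flag[OF finBw Bw(2)], rule ballI)
      fix b assume "b \<in> Bw"
      then have "act (br p1 p2) b = sv (lam (br p1 p2)) b" using Bw(1) bQ by (auto simp: Wl_def)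
      then show "act (br p1 p2) b - sv (lam (br p1 p2)) b \<in> V.span (Bw - {b})"
        by (simp add: V.span_zero)
    qed
    then have "of_nat (card Bw) * lam (br p1 p2) = 0" using tr0 by simp
    moreover have "card Bw \<noteq> 0" using finBw Bwne by simp
    ultimately show ?thesis by simp
  qed
  obtain Bp where Bp: "Bp \<subseteq> P" "G.independent Bp" "P \<subseteq> G.span Bp"
    using G.maximal_independent_subset[of P] by blast
  have finBp: "finite Bp"
    using G.independent_span_bound[OF finBg Bp(2)] spBg by blast
  have fam: "\<exists>E. V.subspace E \<and> E \<subseteq> Wl \<and> (\<exists>e\<in>E. e \<noteq> 0) \<and> (\<forall>p\<in>P. \<forall>e\<in>E. act p e \<in> E)
       \<and> (\<forall>f\<in>F. \<exists>c. \<forall>e\<in>E. act f e = sv c e)" if "finite F" "F \<subseteq> Bp" for F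
    using that
  proof (induction F rule: finite_induct)
    case empty
    show ?case using Wlsub w1Wl w1(2) inv by (intro exI[of _ Wl]) auto
  next
    case (insert f F)
    then obtain E where E: "V.subspace E" "E \<subseteq> Wl" "\<exists>e\<in>E. e \<noteq> 0" "\<forall>p\<in>P. \<forall>e\<in>E. act p e \<in> E"
      "\<forall>f\<in>F. \<exists>c. \<forall>e\<in>E. act f e = sv c e" by auto
    have fP: "f \<in> P" using insert.prems Bp(1) by auto
    obtain e0 where e0: "e0 \<in> E" "e0 \<noteq> 0" using E(3) by blast
    have "E \<subseteq> V.span B0" using E(2) WlW Suc.prems(5) by blast
    then obtain v c where vc: "v \<in> E" "v \<noteq> 0" "act f v = sv c v"
      using V.eigen[OF act_lin E(1) _ _ finB0 e0] E(4) fP by blast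
    define E' where "E' = {e\<in>E. act f e = sv c e}"
    have "V.subspace E'"
    proof (rule V.subspaceI)
      show "0 \<in> E'" using E(1) by (simp add: E'_def V.subspace_0 act_zero_v)
      show "x + y \<in> E'" if "x \<in> E'" "y \<in> E'" for x y
        using that E(1) by (auto simp: E'_def V.subspace_add act_add_v V.scale_right_distrib)
      show "sv a x \<in> E'" if "x \<in> E'" for a x
        using that E(1) by (auto simp: E'_def V.subspace_scale act_scale_v V.scale_left_commute)
    qed
    moreover have "E' \<subseteq> Wl" using E(2) by (auto simp: E'_def)
    moreover have "\<exists>e\<in>E'. e \<noteq> 0" using vc by (auto simp: E'_def)
    moreover have "\<forall>p\<in>P. \<forall>e\<in>E'. act p e \<in> E'"
    proof (intro ballI)
      fix p e assume pP: "p \<in> P" and eE: "e \<in> E'"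
      have "act p e \<in> E" using E(4) pP eE by (auto simp: E'_def)
      moreover have "act f (act p e) = sv c (act p e)"
      proof -
        have "act (br p f) e = act p (act f e) - act f (act p e)" by (rule act_br)
        moreover have "act (br p f) e = sv (lam (br p f)) e"
          using eE E(2) Qcl' pP fP QP by (auto simp: E'_def Wl_def Q_def intro: br_in_derived)
        moreover have "act f e = sv c e" using eE by (simp add: E'_def)
        ultimately show ?thesis using comm[OF pP fP] by (simp add: act_scale_v)
      qed
      ultimately show "act p e \<in> E'" by (simp add: E'_def)
    qed
    moreover have "\<forall>g\<in>insert f F. \<exists>c. \<forall>e\<in>E'. act g e = sv c e"
    proof
      fix g assume "g \<in> insert f F"
      then consider "g = f" | "g \<in> F" by blast
      then show "\<exists>c. \<forall>e\<in>E'. act g e = sv c e"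
      proof cases
        case 1 then show ?thesis by (auto simp: E'_def)
      next
        case 2
        then obtain c' where "\<forall>e\<in>E. act g e = sv c' e" using E(5) by blast
        then show ?thesis by (auto simp: E'_def)
      qed
    qed
    ultimately show ?case by blast
  qed
  obtain E where E: "E \<subseteq> Wl" "\<exists>e\<in>E. e \<noteq> 0" "\<forall>f\<in>Bp. \<exists>c. \<forall>e\<in>E. act f e = sv c e"
    using fam[OF finBp order_refl] by blast
  obtain e where e: "e \<in> E" "e \<noteq> 0" using E(2) by blast
  have "G.subspace {p. \<exists>c. act p e = sv c e}"
  proof (rule G.subspaceI)
    show "0 \<in> {p. \<exists>c. act p e = sv c e}" by (auto simp: act_zero_g intro: exI[of _ 0])
    show "x + y \<in> {p. \<exists>c. act p e = sv c e}" if "x \<in> {p. \<exists>c. act p e = sv c e}" "y \<in> {p. \<exists>c. act p e = sv c e}" for x y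
      using that by (auto simp: act_add_g V.scale_left_distrib[symmetric])
    show "sg a x \<in> {p. \<exists>c. act p e = sv c e}" if "x \<in> {p. \<exists>c. act p e = sv c e}" for a x
      using that by (auto simp: act_scale_g)
  qed
  moreover have "Bp \<subseteq> {p. \<exists>c. act p e = sv c e}" using E(3) e(1) by blast
  ultimately have "G.span Bp \<subseteq> {p. \<exists>c. act p e = sv c e}" by (rule G.span_minimal[rotated])
  then have "\<forall>p\<in>P. \<exists>c. act p e = sv c e" using Bp(3) by blast
  moreover have "e \<in> W" using e(1) E(1) WlW by blast
  ultimately show ?case using e(2) by blast
qed

end


primrec orbit :: "('g \<Rightarrow> 'v \<Rightarrow> 'v) \<Rightarrow> 'g set \<Rightarrow> 'v \<Rightarrow> nat \<Rightarrow> 'v set" where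
  "orbit act Bg v 0 = {v}"
| "orbit act Bg v (Suc n) = orbit act Bg v n \<union> (\<lambda>(b, s). act b s) ` (Bg \<times> orbit act Bg v n)"

lemma finite_orbit: "finite Bg \<Longrightarrow> finite (orbit act Bg v n)"
  by (induction n) auto

context lie_setting
begin

lemma lf_imp_qw:
  assumes finBg: "finite Bg" and spBg: "G.span Bg = UNIV"
    and id: "lie_ideal sg br P" and sol: "solvable sg br P"
    and lf: "locally_finite sv act P" and irr: "irreducible_module sv act"
  shows "quasi_whittaker_module sg br sv act P"
proof -
  obtain v0 :: 'v where v0: "v0 \<noteq> 0" using irr unfolding irreducible_module_def by auto
  obtain W where W: "v0 \<in> W" "submodule sv act P W" "fin_dim_subspace sv W"
    using lf unfolding locally_finite_def by blast
  obtain B0 where B0: "finite B0" "B0 \<subseteq> W" "V.span B0 = W"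
    using W(3) unfolding fin_dim_subspace_def by blast
  have Psub: "G.subspace P" and Pid: "\<forall>x y. y \<in> P \<longrightarrow> br x y \<in> P"
    using id unfolding lie_ideal_def by auto
  obtain n where n: "derived_series sg br P n = {0}" using sol unfolding solvable_def by blast
  have Wsub: "V.subspace W" and WP: "\<forall>p\<in>P. \<forall>w\<in>W. act p w \<in> W"
    using W(2) unfolding submodule_def by auto
  obtain w where w: "w \<in> W" "w \<noteq> 0" "\<forall>p\<in>P. \<exists>c. act p w = sv c w"
    using lie_thm[OF finBg spBg B0(1) Psub _ n Wsub _ W(1) v0 WP] Pid B0(3) by blast
  define \<phi> where "\<phi> p = (SOME c. act p w = sv c w)" for p
  have phi: "act p w = sv (\<phi> p) w" if "p \<in> P" for p
    using w(3) that unfolding \<phi>_def by (metis (mono_tags, lifting) someI_ex)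
  have uniq: "a = b" if "sv a w = sv b w" for a b using that w(2) by simp
  have lin: "\<phi> (sg a x + sg b y) = a * \<phi> x + b * \<phi> y" if "x \<in> P" "y \<in> P" for a b x y
  proof -
    have "sg a x + sg b y \<in> P" using Psub that by (simp add: G.subspace_add G.subspace_scale)
    then have "sv (\<phi> (sg a x + sg b y)) w = act (sg a x + sg b y) w" using phi by simp
    also have "\<dots> = sv (a * \<phi> x + b * \<phi> y) w"
      using phi[OF that(1)] phi[OF that(2)] by (simp add: act_add_g act_scale_g V.scale_left_distrib)
    finally show ?thesis by (rule uniq)
  qed
  have "\<phi> z = 0" if "z \<in> derived sg br P" for z
  proof -
    define Z where "Z = {z \<in> P. \<phi> z = 0}"
    have "G.subspace Z"
    proof (rule G.subspaceI)
      have "sv (\<phi> 0) w = sv 0 w" using phi[of 0] Psub by (simp add: G.subspace_0 act_zero_g)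
      then show "0 \<in> Z" using Psub by (simp add: Z_def G.subspace_0 uniq)
      show "x + y \<in> Z" if "x \<in> Z" "y \<in> Z" for x y
        using that lin[of x y 1 1] by (simp add: Z_def G.subspace_add[OF Psub])
      show "sg c x \<in> Z" if "x \<in> Z" for c x
        using that lin[of x x c 0] by (simp add: Z_def G.subspace_scale[OF Psub])
    qed
    moreover have "{br a b | a b. a \<in> P \<and> b \<in> P} \<subseteq> Z"
    proof clarify
      fix a b assume ab: "a \<in> P" "b \<in> P"
      have bP: "br a b \<in> P" using Pid ab by blast
      have "sv (\<phi> (br a b)) w = act (br a b) w" using phi[OF bP] by simp
      also have "\<dots> = sv 0 w"
        using phi[OF ab(1)] phi[OF ab(2)] by (simp add: act_br act_scale_v mult.commute)
      finally show "br a b \<in> Z" using bP uniq by (simp add: Z_def)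
    qed
    ultimately have "derived sg br P \<subseteq> Z" unfolding derived_def by (rule G.span_minimal[rotated])
    then show ?thesis using that by (auto simp: Z_def)
  qed
  then have hom: "lie_hom_to_C sg br P \<phi>" unfolding lie_hom_to_C_def using lin by blast
  have qv: "quasi_whittaker_vector sv act P \<phi> w"
    unfolding quasi_whittaker_vector_def using phi by blast
  have gen: "generates sv act w"
    unfolding generates_def
  proof (intro allI impI)
    fix U assume U: "submodule sv act UNIV U \<and> w \<in> U"
    then have "U = {0} \<or> U = UNIV" using irr unfolding irreducible_module_def by blast
    then show "U = UNIV" using U w(2) by auto
  qed
  show ?thesis unfolding quasi_whittaker_module_def using hom qv gen by blast
qed

lemma qw_imp_lf:
  assumes finBg: "finite Bg" and spBg: "G.span Bg = UNIV"
    and id: "lie_ideal sg br P" and qw: "quasi_whittaker_module sg br sv act P"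
  shows "locally_finite sv act P"
proof -
  obtain \<phi> v where qv: "quasi_whittaker_vector sv act P \<phi> v" and gen: "generates sv act v"
    using qw unfolding quasi_whittaker_module_def by blast
  have Psub: "G.subspace P" and Pid: "\<forall>x y. y \<in> P \<longrightarrow> br x y \<in> P"
    using id unfolding lie_ideal_def by auto
  define S where "S = orbit act Bg v"
  define M where "M n = V.span (S n)" for n
  have Smono: "S n \<subseteq> S (Suc n)" for n by (auto simp: S_def)
  have Mmono1: "M n \<subseteq> M (Suc n)" for n unfolding M_def by (rule V.span_mono[OF Smono])
  have Mmono: "M j \<subseteq> M k" if "j \<le> k" for j k
    using lift_Suc_mono_le[of M, OF Mmono1 that] .
  have bS: "act b s \<in> S (Suc n)" if "b \<in> Bg" "s \<in> S n" for b s n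
    using that by (auto simp: S_def)
  have bM: "act b w \<in> M (Suc n)" if "b \<in> Bg" "w \<in> M n" for b w n
  proof -
    have "act b ` S n \<subseteq> M (Suc n)" using bS[OF that(1)] V.span_superset unfolding M_def by blast
    then show ?thesis using V.lin_span_into[OF act_lin V.subspace_span[of "S (Suc n)"]] that(2)
      unfolding M_def by blast
  qed
  have gM: "act x w \<in> M (Suc n)" if "w \<in> M n" for x w n
  proof -
    have "G.subspace {x. \<forall>w\<in>M n. act x w \<in> M (Suc n)}"
    proof (rule G.subspaceI)
      show "0 \<in> {x. \<forall>w\<in>M n. act x w \<in> M (Suc n)}" by (simp add: act_zero_g M_def V.span_zero)
      show "x + y \<in> {x. \<forall>w\<in>M n. act x w \<in> M (Suc n)}"
        if "x \<in> {x. \<forall>w\<in>M n. act x w \<in> M (Suc n)}" "y \<in> {x. \<forall>w\<in>M n. act x w \<in> M (Suc n)}" for x y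
        using that by (simp add: act_add_g M_def V.span_add)
      show "sg c x \<in> {x. \<forall>w\<in>M n. act x w \<in> M (Suc n)}"
        if "x \<in> {x. \<forall>w\<in>M n. act x w \<in> M (Suc n)}" for c x
        using that by (simp add: act_scale_g M_def V.span_scale)
    qed
    moreover have "Bg \<subseteq> {x. \<forall>w\<in>M n. act x w \<in> M (Suc n)}" using bM by blast
    ultimately have "G.span Bg \<subseteq> {x. \<forall>w\<in>M n. act x w \<in> M (Suc n)}" by (rule G.span_minimal[rotated])
    then show ?thesis using spBg that by blast
  qed
  have brP: "br p b \<in> P" if "p \<in> P" for p b
  proof -
    have "br b p \<in> P" using Pid that by blast
    then have "- br b p \<in> P" using G.subspace_neg[OF Psub] by blast
    then show ?thesis by (simp add: br_antisym[of p b])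
  qed
  have PS: "\<forall>p\<in>P. \<forall>s\<in>S n. act p s \<in> M n" for n
  proof (induction n)
    case 0
    show ?case using qv unfolding quasi_whittaker_vector_def
      by (auto simp: S_def M_def intro: V.span_scale V.span_base)
  next
    case (Suc n)
    show ?case
    proof (intro ballI)
      fix p s assume pP: "p \<in> P" and s: "s \<in> S (Suc n)"
      have sub: "act p t \<in> M n" if "t \<in> S n" for t using Suc pP that by blast
      have "S (Suc n) = S n \<union> (\<lambda>(b, s). act b s) ` (Bg \<times> S n)" by (simp add: S_def)
      then consider "s \<in> S n" | b t where "b \<in> Bg" "t \<in> S n" "s = act b t" using s by auto
      then show "act p s \<in> M (Suc n)"
      proof cases
        case 1 then show ?thesis using sub Mmono1 by blast
      next
        case 2
        have "act p (act b t) = act b (act p t) + act (br p b) t" by (simp add: act_br)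
        moreover have "act b (act p t) \<in> M (Suc n)" using bM[OF 2(1) sub[OF 2(2)]] .
        moreover have "act (br p b) t \<in> M (Suc n)" using Suc brP[OF pP] 2(2) Mmono1 by blast
        ultimately show ?thesis using 2(3) unfolding M_def by (simp add: V.span_add)
      qed
    qed
  qed
  have PM: "act p w \<in> M n" if "p \<in> P" "w \<in> M n" for p w n
    using V.lin_span_into[OF act_lin V.subspace_span[of "S n"]] PS that unfolding M_def by blast
  define U where "U = (\<Union>n. M n)"
  have "V.subspace U"
  proof (rule V.subspaceI)
    show "0 \<in> U" by (auto simp: U_def M_def V.span_zero)
    show "x + y \<in> U" if xU: "x \<in> U" and yU: "y \<in> U" for x y
    proof -
      obtain i where "x \<in> M i" using xU unfolding U_def by blast
      moreover obtain j where "y \<in> M j" using yU unfolding U_def by blast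
      ultimately have "x \<in> M (max i j)" "y \<in> M (max i j)" using Mmono[of i "max i j"] Mmono[of j "max i j"] by auto
      then have "x + y \<in> M (max i j)" unfolding M_def by (rule V.span_add)
      then show ?thesis by (auto simp: U_def)
    qed
    show "sv c x \<in> U" if "x \<in> U" for c x
      using that unfolding U_def M_def by (auto intro: V.span_scale)
  qed
  moreover have "\<forall>x\<in>UNIV. \<forall>w\<in>U. act x w \<in> U" using gM by (auto simp: U_def)
  moreover have "v \<in> U" by (auto simp: U_def M_def S_def intro!: exI[of _ 0] V.span_base)
  ultimately have "U = UNIV" using gen unfolding generates_def submodule_def by blast
  show ?thesis unfolding locally_finite_def
  proof
    fix u :: 'v
    obtain n where "u \<in> M n" using \<open>U = UNIV\<close> by (auto simp: U_def)
    moreover have "submodule sv act P (M n)" unfolding submodule_def using PM by (simp add: M_def)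
    moreover have "fin_dim_subspace sv (M n)" unfolding fin_dim_subspace_def M_def
      using finite_orbit[OF finBg, of act v n] V.span_superset[of "S n"] unfolding S_def by blast
    ultimately show "\<exists>W. u \<in> W \<and> submodule sv act P W \<and> fin_dim_subspace sv W" by blast
  qed
qed

end

theorem theorem2p5:
  fixes sg :: "complex \<Rightarrow> 'g::ab_group_add \<Rightarrow> 'g"
    and br :: "'g \<Rightarrow> 'g \<Rightarrow> 'g"
    and sv :: "complex \<Rightarrow> 'v::ab_group_add \<Rightarrow> 'v"
    and act :: "'g \<Rightarrow> 'v \<Rightarrow> 'v"
    and P :: "'g set"
  assumes "lie_algebra sg br"
    and "fin_dim_subspace sg (UNIV :: 'g set)"
    and "\<not> semisimple sg br"
    and "lie_ideal sg br P"
    and "solvable sg br P"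
    and "\<not> perfect sg br P"
    and "lie_module sg br sv act"
    and "irreducible_module sv act"
  shows "locally_finite sv act P \<longleftrightarrow> quasi_whittaker_module sg br sv act P"
proof -
  interpret L: lie_setting sg br sv act using assms(1,7) by (rule lie_setting.intro)
  obtain Bg where Bg: "finite Bg" "module.span sg Bg = UNIV"
    using assms(2) unfolding fin_dim_subspace_def by blast
  show ?thesis
    using L.lf_imp_qw[OF Bg assms(4,5) _ assms(8)] L.qw_imp_lf[OF Bg assms(4)] by blast
qed

end
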